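(* Let $G$ be a finite group and let $\mathcal{C}$ be a cycle of $\mathcal{P}(G)$. Then there exists a cycle $\mathcal{C}'$ of $\mathcal{P}(G)$ whose vertex set contains that of $\mathcal{C}$ and such that $[x]_{\mathtt{N}}\subseteq V_{\mathcal{C}'}$ for every $x\in V_{\mathcal{C}'}$.
   Context: The power graph $\mathcal{P}(G)$ has vertex set $G$, and distinct $x,y$ are adjacent iff one is a positive integer power of the other. $N[x]$ is the closed neighbourhood of $x$ in $\mathcal{P}(G)$; $x\mathtt{N}y$ iff $N[x]=N[y]$, with class $[x]_{\mathtt{N}}$. A cycle is a subgraph whose $k\ge3$ distinct vertices can be arranged cyclically with consecutive vertices adjacent; $V_{\mathcal{C}}$ is its vertex set. *)

theory Defs
  imports "HOL-Algebra.Group"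
begin

text \<open>Power graph of a group G: vertex set carrier G; distinct x, y adjacent iff
  one is a positive integer power of the other.\<close>
definition pg_adj :: "('a, 'b) monoid_scheme \<Rightarrow> 'a \<Rightarrow> 'a \<Rightarrow> bool" where
  "pg_adj G x y \<longleftrightarrow> x \<in> carrier G \<and> y \<in> carrier G \<and> x \<noteq> y \<and>
     ((\<exists>n::nat. n > 0 \<and> y = x [^]\<^bsub>G\<^esub> n) \<or> (\<exists>n::nat. n > 0 \<and> x = y [^]\<^bsub>G\<^esub> n))"

definition pg_closed_nbhd :: "('a, 'b) monoid_scheme \<Rightarrow> 'a \<Rightarrow> 'a set" where
  "pg_closed_nbhd G x = {x} \<union> {y \<in> carrier G. pg_adj G x y}"

definition pg_N_class :: "('a, 'b) monoid_scheme \<Rightarrow> 'a \<Rightarrow> 'a set" where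
  "pg_N_class G x = {y \<in> carrier G. pg_closed_nbhd G y = pg_closed_nbhd G x}"

text \<open>A cycle, given by the cyclic list of its k \<ge> 3 distinct vertices,
  consecutive vertices (cyclically) adjacent. Its vertex set is set cs.\<close>
definition pg_cycle :: "('a, 'b) monoid_scheme \<Rightarrow> 'a list \<Rightarrow> bool" where
  "pg_cycle G cs \<longleftrightarrow> length cs \<ge> 3 \<and> distinct cs \<and> set cs \<subseteq> carrier G \<and>
     (\<forall>i < length cs. pg_adj G (cs ! i) (cs ! ((i + 1) mod length cs)))"

end

theory Submission
  imports Defs
begin

lemma adj_sym: "pg_adj G x y \<Longrightarrow> pg_adj G y x"
  unfolding pg_adj_def by blast

lemma class_adj:
  assumes "y \<in> pg_N_class G x" "y \<noteq> x"
  shows "pg_adj G x y"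
proof -
  have "y \<in> pg_closed_nbhd G y" unfolding pg_closed_nbhd_def by simp
  then have "y \<in> pg_closed_nbhd G x" using assms unfolding pg_N_class_def by simp
  then show ?thesis using assms(2) unfolding pg_closed_nbhd_def by auto
qed

lemma twin:
  assumes "y \<in> pg_N_class G x" "pg_adj G x z" "z \<noteq> y"
  shows "pg_adj G y z"
proof -
  have "z \<in> pg_closed_nbhd G x" using assms(2) unfolding pg_closed_nbhd_def pg_adj_def by auto
  then have "z \<in> pg_closed_nbhd G y" using assms unfolding pg_N_class_def by simp
  then show ?thesis using assms(3) unfolding pg_closed_nbhd_def by auto
qed

lemma cycle_rotate:
  assumes "pg_cycle G cs"
  shows "pg_cycle G (rotate k cs)"
proof -
  let ?n = "length cs"
  have n: "?n \<ge> 3" using assms unfolding pg_cycle_def by simp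
  have A: "\<forall>i < ?n. pg_adj G (cs ! i) (cs ! ((i + 1) mod ?n))"
    using assms unfolding pg_cycle_def by simp
  have "pg_adj G (rotate k cs ! i) (rotate k cs ! ((i + 1) mod ?n))" if i: "i < ?n" for i
  proof -
    have 1: "rotate k cs ! i = cs ! ((k + i) mod ?n)" using i n by (simp add: nth_rotate)
    have "(i + 1) mod ?n < ?n" using n by (intro mod_less_divisor) linarith
    then have "rotate k cs ! ((i + 1) mod ?n) = cs ! ((k + (i + 1) mod ?n) mod ?n)"
      by (simp add: nth_rotate)
    also have "(k + (i + 1) mod ?n) mod ?n = (((k + i) mod ?n) + 1) mod ?n"
      by (simp add: mod_simps)
    finally have 2: "rotate k cs ! ((i + 1) mod ?n) = cs ! ((((k + i) mod ?n) + 1) mod ?n)" .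
    have "(k + i) mod ?n < ?n" using n by (intro mod_less_divisor) linarith
    from A[rule_format, OF this] show ?thesis unfolding 1 2 .
  qed
  then show ?thesis using assms unfolding pg_cycle_def by simp
qed

lemma cycle_insert:
  assumes D: "pg_cycle G (x # rest)" and y: "y \<in> pg_N_class G x" "y \<notin> set (x # rest)"
  shows "pg_cycle G (y # x # rest)"
proof -
  let ?D = "x # rest"
  let ?n = "length ?D"
  have n: "?n \<ge> 3" and A: "\<forall>i < ?n. pg_adj G (?D ! i) (?D ! ((i + 1) mod ?n))"
    using D unfolding pg_cycle_def by auto
  have yx: "y \<noteq> x" using y by auto
  have yc: "y \<in> carrier G" using y unfolding pg_N_class_def by auto
  have "pg_adj G ((y # ?D) ! i) ((y # ?D) ! ((i + 1) mod (?n + 1)))" if i: "i < ?n + 1" for i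
  proof (cases "i = 0")
    case True
    have "pg_adj G y x" using adj_sym[OF class_adj[OF y(1) yx]] .
    then show ?thesis using True n by simp
  next
    case False
    show ?thesis
    proof (cases "i = ?n")
      case True
      have "pg_adj G (?D ! (?n - 1)) (?D ! 0)" using A[rule_format, of "?n - 1"] n by simp
      then have "pg_adj G (?D ! (?n - 1)) x" by simp
      then have "pg_adj G x (?D ! (?n - 1))" by (rule adj_sym)
      moreover have "?D ! (?n - 1) \<noteq> y"
      proof -
        have "?n - 1 < ?n" using n by simp
        then have "?D ! (?n - 1) \<in> set ?D" by (rule nth_mem)
        then show ?thesis using y(2) by auto
      qed
      ultimately have a: "pg_adj G y (?D ! (?n - 1))" by (rule twin[OF y(1)])
      have e1: "(y # ?D) ! i = ?D ! (?n - 1)" using True by simp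
      have e2: "(i + 1) mod (?n + 1) = 0" using True by simp
      show ?thesis using e1 e2 adj_sym[OF a] by simp
    next
      case False2: False
      obtain j where j: "i = Suc j" using \<open>i \<noteq> 0\<close> by (cases i) auto
      have "j + 1 < ?n" using j i False2 by simp
      then have "pg_adj G (?D ! j) (?D ! (j + 1))" using A[rule_format, of j] by simp
      moreover have "(i + 1) mod (?n + 1) = Suc (j + 1)" using j i False2 by simp
      ultimately show ?thesis using j by simp
    qed
  qed
  moreover have "distinct (y # ?D)" "set (y # ?D) \<subseteq> carrier G"
    using D y yc unfolding pg_cycle_def by auto
  ultimately show ?thesis using n unfolding pg_cycle_def by auto
qed

lemma cycle_grow:
  assumes C: "pg_cycle G C" and xC: "x \<in> set C" and y: "y \<in> pg_N_class G x" "y \<notin> set C"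
  shows "\<exists>C2. pg_cycle G C2 \<and> set C2 = insert y (set C)"
proof -
  obtain i where i: "i < length C" "C ! i = x" using xC by (metis in_set_conv_nth)
  have R: "pg_cycle G (rotate i C)" using cycle_rotate C by blast
  have "0 < length C" using i(1) by linarith
  then have "rotate i C ! 0 = C ! ((i + 0) mod length C)" by (rule nth_rotate)
  then have "rotate i C ! 0 = x" using i by simp
  moreover have "rotate i C \<noteq> []" using i by (cases C) auto
  ultimately obtain rest where r: "rotate i C = x # rest" by (cases "rotate i C") auto
  have sr: "set (x # rest) = set C" using r by (metis set_rotate)
  have "y \<notin> set (x # rest)" using y(2) sr by simp
  then have "pg_cycle G (y # x # rest)" using cycle_insert[of G x rest y] R r y(1) by simp
  moreover have "set (y # x # rest) = insert y (set C)" using sr by simp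
  ultimately show ?thesis by blast
qed

theorem mainTheorem6:
  fixes G :: "('a, 'b) monoid_scheme" and C :: "'a list"
  assumes "group G" and "finite (carrier G)" and "pg_cycle G C"
  shows "\<exists>C'. pg_cycle G C' \<and> set C \<subseteq> set C' \<and>
           (\<forall>x \<in> set C'. pg_N_class G x \<subseteq> set C')"
  using assms(3)
proof (induction "card (carrier G - set C)" arbitrary: C rule: less_induct)
  case less
  show ?case
  proof (cases "\<forall>x \<in> set C. pg_N_class G x \<subseteq> set C")
    case True
    then show ?thesis using less.prems by blast
  next
    case False
    then obtain x y where xy: "x \<in> set C" "y \<in> pg_N_class G x" "y \<notin> set C" by blast
    obtain C2 where C2: "pg_cycle G C2" "set C2 = insert y (set C)"
      using cycle_grow[OF less.prems xy] by blast
    have yc: "y \<in> carrier G" using xy unfolding pg_N_class_def by auto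
    have "carrier G - set C2 = (carrier G - set C) - {y}" using C2 by auto
    then have "card (carrier G - set C2) < card (carrier G - set C)"
      using yc xy(3) assms(2) by (metis DiffI card_Diff1_less finite_Diff)
    then obtain C' where "pg_cycle G C'" "set C2 \<subseteq> set C'" "\<forall>x \<in> set C'. pg_N_class G x \<subseteq> set C'"
      using less.hyps C2(1) by blast
    then show ?thesis using C2(2) by blast
  qed
qed

end
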